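(* Let $m\geq 1$ and let $\Lambda_m\supseteq\Delta_m$ be the lattices in $\mathbb{R}^{2^m}$ defined below. Let $\ell\in\Lambda_m$ be a minimal vector, i.e. $(\ell,\ell)=2^{m-1}$. Then for every $x\in \ell+\Delta_m$ either $(x,x)=(\ell,\ell)=2^{m-1}$ or $(x,x)\geq 2^m$.
   Context: Let $\mathcal{V}_m=\mathbb{F}_2^m$. Let $(e_v\mid v\in\mathcal{V}_m)$ be an orthonormal basis of Euclidean space $(\mathbb{R}^{2^m},(\cdot,\cdot))$ indexed by the elements of $\mathcal{V}_m$. For a subset $\mathcal{U}\subseteq\mathcal{V}_m$ put $x_{\mathcal{U}}=\sum_{v\in\mathcal{U}}e_v$. Define $\Lambda_m=\langle 2^{\lfloor (m-r)/2\rfloor}x_{\mathcal{U}} \mid 0\le r\le m,\ \mathcal{U}\text{ an affine subspace of }\mathcal{V}_m\text{ of dimension }r\rangle_{\mathbb{Z}}$ and $\Delta_m=\langle 2^{\lfloor (m-r+1)/2\rfloor}x_{\mathcal{U}} \mid 0\le r\le m,\ \mathcal{U}\text{ an affine subspace of }\mathcal{V}_m\text{ of dimension }r\rangle_{\mathbb{Z}}$ (the Barnes–Wall lattices). The minimum (smallest nonzero value of $(x,x)$) of $\Lambda_m$ is $2^{m-1}$ and that of $\Delta_m$ is $2^m$; a minimal vector is a vector attaining the minimum. *)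

theory Defs
  imports Complex_Main
begin

text \<open>The space V_m = F_2^m, modelled as boolean lists of length m; addition is xor.\<close>
definition Vsp :: "nat \<Rightarrow> bool list set" where
  "Vsp m = {v. length v = m}"

definition vadd :: "bool list \<Rightarrow> bool list \<Rightarrow> bool list" where
  "vadd u w = map2 (\<noteq>) u w"

definition lin_subspace :: "nat \<Rightarrow> bool list set \<Rightarrow> bool" where
  "lin_subspace m W \<longleftrightarrow> W \<subseteq> Vsp m \<and> replicate m False \<in> W \<and>
     (\<forall>u\<in>W. \<forall>w\<in>W. vadd u w \<in> W)"

definition affine_subspace :: "nat \<Rightarrow> nat \<Rightarrow> bool list set \<Rightarrow> bool" where
  "affine_subspace m r U \<longleftrightarrow> (\<exists>a W. a \<in> Vsp m \<and> lin_subspace m W \<and> card W = 2 ^ r \<and>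
      U = vadd a ` W)"

text \<open>Vectors of R^(2^m) with orthonormal basis (e_v | v in V_m): real functions on V_m,
  zero outside V_m.  x_U is the indicator vector of U.\<close>
definition xvec :: "bool list set \<Rightarrow> bool list \<Rightarrow> real" where
  "xvec U = (\<lambda>v. if v \<in> U then 1 else 0)"

definition inner_V :: "nat \<Rightarrow> (bool list \<Rightarrow> real) \<Rightarrow> (bool list \<Rightarrow> real) \<Rightarrow> real" where
  "inner_V m x y = (\<Sum>v\<in>Vsp m. x v * y v)"

inductive_set int_span :: "(bool list \<Rightarrow> real) set \<Rightarrow> (bool list \<Rightarrow> real) set"
  for S :: "(bool list \<Rightarrow> real) set" where
  zero: "(\<lambda>_. 0) \<in> int_span S"
| add: "x \<in> int_span S \<Longrightarrow> g \<in> S \<Longrightarrow> (\<lambda>v. x v + g v) \<in> int_span S"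
| sub: "x \<in> int_span S \<Longrightarrow> g \<in> S \<Longrightarrow> (\<lambda>v. x v - g v) \<in> int_span S"

definition Lambda_BW :: "nat \<Rightarrow> (bool list \<Rightarrow> real) set" where
  "Lambda_BW m = int_span {(\<lambda>v. 2 ^ ((m - r) div 2) * xvec U v) | r U.
      r \<le> m \<and> affine_subspace m r U}"

definition Delta_BW :: "nat \<Rightarrow> (bool list \<Rightarrow> real) set" where
  "Delta_BW m = int_span {(\<lambda>v. 2 ^ ((m - r + 1) div 2) * xvec U v) | r U.
      r \<le> m \<and> affine_subspace m r U}"

end

theory Submission
  imports Defs
begin

definition vp :: "(bool list \<Rightarrow> real) \<Rightarrow> (bool list \<Rightarrow> real) \<Rightarrow> (bool list \<Rightarrow> real)" where
  "vp x y = (\<lambda>v. x v + y v)"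
definition vm :: "(bool list \<Rightarrow> real) \<Rightarrow> (bool list \<Rightarrow> real) \<Rightarrow> (bool list \<Rightarrow> real)" where
  "vm x y = (\<lambda>v. x v - y v)"
definition vn :: "(bool list \<Rightarrow> real) \<Rightarrow> (bool list \<Rightarrow> real)" where
  "vn x = (\<lambda>v. - x v)"
definition vs :: "real \<Rightarrow> (bool list \<Rightarrow> real) \<Rightarrow> (bool list \<Rightarrow> real)" where
  "vs c x = (\<lambda>v. c * x v)"
definition zz :: "bool list \<Rightarrow> real" where "zz = (\<lambda>v. 0)"
definition sl :: "bool \<Rightarrow> (bool list \<Rightarrow> real) \<Rightarrow> (bool list \<Rightarrow> real)" where
  "sl b x = (\<lambda>w. x (b # w))"

lemma sl_simps[simp]:
  "sl b (vp x y) = vp (sl b x) (sl b y)" "sl b (vm x y) = vm (sl b x) (sl b y)"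
  "sl b (vn x) = vn (sl b x)" "sl b (vs c x) = vs c (sl b x)" "sl b zz = zz"
  by (auto simp: sl_def vp_def vm_def vn_def vs_def zz_def)

lemma v_apply: "vp x y v = x v + y v" "vm x y v = x v - y v" "vn x v = - x v"
  "vs c x v = c * x v" "zz v = 0"
  by (auto simp: vp_def vm_def vn_def vs_def zz_def)

lemma v_nil[simp]: "vp x y [] = x [] + y []" "vm x y [] = x [] - y []" "vn x [] = - x []"
  "vs c x [] = c * x []" "zz [] = 0"
  by (auto simp: vp_def vm_def vn_def vs_def zz_def)

fun Lset :: "nat \<Rightarrow> nat \<Rightarrow> (bool list \<Rightarrow> real) set" where
  "Lset j 0 = {x. \<exists>n::int. x = (\<lambda>v. if v = [] then 2 ^ (j div 2) * of_int n else 0)}"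
| "Lset j (Suc k) = {x. x [] = 0 \<and> sl False x \<in> Lset j k \<and> sl True x \<in> Lset j k \<and>
      vm (sl True x) (sl False x) \<in> Lset (Suc j) k}"

lemma L_zero: "zz \<in> Lset j k"
proof (induction k arbitrary: j)
  case 0 then show ?case by (auto simp: zz_def intro!: exI[of _ 0] ext)
next
  case (Suc k)
  have "vm zz zz = zz" by (simp add: vm_def zz_def)
  then show ?case using Suc by simp
qed

lemma L_add: "x \<in> Lset j k \<Longrightarrow> y \<in> Lset j k \<Longrightarrow> vp x y \<in> Lset j k"
proof (induction k arbitrary: j x y)
  case 0
  then obtain n m where "x = (\<lambda>v. if v = [] then 2 ^ (j div 2) * of_int n else 0)"
    "y = (\<lambda>v. if v = [] then 2 ^ (j div 2) * of_int m else 0)" by auto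
  then show ?case by (auto simp: vp_def algebra_simps intro!: exI[of _ "n+m"] ext)
next
  case (Suc k)
  have "vm (vp (sl True x) (sl True y)) (vp (sl False x) (sl False y)) =
        vp (vm (sl True x) (sl False x)) (vm (sl True y) (sl False y))"
    by (auto simp: vm_def vp_def)
  with Suc show ?case by auto
qed

lemma L_neg: "x \<in> Lset j k \<Longrightarrow> vn x \<in> Lset j k"
proof (induction k arbitrary: j x)
  case 0
  then obtain n where "x = (\<lambda>v. if v = [] then 2 ^ (j div 2) * of_int n else 0)" by auto
  then show ?case by (auto simp: vn_def intro!: exI[of _ "-n"] ext)
next
  case (Suc k)
  have "vm (vn (sl True x)) (vn (sl False x)) = vn (vm (sl True x) (sl False x))"
    by (auto simp: vm_def vn_def)
  with Suc show ?case by auto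
qed

lemma vm_as_vp: "vm x y = vp x (vn y)" by (auto simp: vm_def vp_def vn_def)

lemma L_sub: "x \<in> Lset j k \<Longrightarrow> y \<in> Lset j k \<Longrightarrow> vm x y \<in> Lset j k"
  by (simp add: vm_as_vp L_add L_neg)

lemma L_mono: "x \<in> Lset (Suc j) k \<Longrightarrow> x \<in> Lset j k"
proof (induction k arbitrary: j x)
  case 0
  then obtain n where n: "x = (\<lambda>v. if v = [] then 2 ^ (Suc j div 2) * of_int n else 0)" by auto
  show ?case
  proof (cases "even j")
    case True
    then have "Suc j div 2 = j div 2" by presburger
    then show ?thesis using n by (auto intro!: exI[of _ n])
  next
    case False
    then have "Suc j div 2 = Suc (j div 2)" by presburger
    then show ?thesis using n by (auto intro!: exI[of _ "2*n"] ext)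
  qed
next
  case (Suc k)
  then show ?case by auto
qed

lemma L_mono2: "x \<in> Lset (Suc (Suc j)) k \<Longrightarrow> x \<in> Lset j k"
  using L_mono by blast

lemma L_dbl: "x \<in> Lset j k \<Longrightarrow> vs 2 x \<in> Lset (Suc (Suc j)) k"
proof (induction k arbitrary: j x)
  case 0
  then obtain n where n: "x = (\<lambda>v. if v = [] then 2 ^ (j div 2) * of_int n else 0)" by auto
  have "Suc (Suc j) div 2 = Suc (j div 2)" by presburger
  then show ?case using n by (auto simp: vs_def intro!: exI[of _ n] ext)
next
  case (Suc k)
  have "vm (vs 2 (sl True x)) (vs 2 (sl False x)) = vs 2 (vm (sl True x) (sl False x))"
    by (auto simp: vm_def vs_def algebra_simps)
  with Suc show ?case by auto
qed

lemma L_half: "x \<in> Lset (Suc (Suc j)) k \<Longrightarrow> vs (1/2) x \<in> Lset j k"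
proof (induction k arbitrary: j x)
  case 0
  then obtain n where n: "x = (\<lambda>v. if v = [] then 2 ^ (Suc (Suc j) div 2) * of_int n else 0)" by auto
  have "Suc (Suc j) div 2 = Suc (j div 2)" by presburger
  then show ?case using n by (auto simp: vs_def intro!: exI[of _ n] ext)
next
  case (Suc k)
  have "vm (vs (1/2) (sl True x)) (vs (1/2) (sl False x)) = vs (1/2) (vm (sl True x) (sl False x))"
    by (auto simp: vm_def vs_def algebra_simps)
  with Suc show ?case by auto
qed

lemma L_canon: "x \<in> Lset j k \<Longrightarrow> v \<notin> Vsp k \<Longrightarrow> x v = 0"
proof (induction k arbitrary: j x v)
  case 0
  then show ?case by (auto simp: Vsp_def)
next
  case (Suc k)
  show ?case
  proof (cases v)
    case Nil
    then show ?thesis using Suc by auto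
  next
    case (Cons b w)
    then have "w \<notin> Vsp k" using Suc.prems by (auto simp: Vsp_def)
    then have "sl b x w = 0" using Suc by (cases b) auto
    then show ?thesis using Cons by (simp add: sl_def)
  qed
qed

lemma Vsp_Suc: "Vsp (Suc k) = Cons False ` Vsp k \<union> Cons True ` Vsp k"
proof -
  have "v \<in> Cons False ` Vsp k \<union> Cons True ` Vsp k" if "v \<in> Vsp (Suc k)" for v
  proof (cases v)
    case Nil then show ?thesis using that by (simp add: Vsp_def)
  next
    case (Cons b w) then show ?thesis using that by (cases b) (auto simp: Vsp_def)
  qed
  then show ?thesis by (auto simp: Vsp_def)
qed

lemma finite_Vsp: "finite (Vsp k)"
proof (induction k)
  case 0 then show ?case by (simp add: Vsp_def)
next
  case (Suc k) then show ?case by (simp add: Vsp_Suc)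
qed

lemma inner_split: "inner_V (Suc k) x y = inner_V k (sl False x) (sl False y) + inner_V k (sl True x) (sl True y)"
proof -
  have d: "Cons False ` Vsp k \<inter> Cons True ` Vsp k = {}" by auto
  have "inner_V (Suc k) x y = (\<Sum>v\<in>Cons False ` Vsp k. x v * y v) + (\<Sum>v\<in>Cons True ` Vsp k. x v * y v)"
    unfolding inner_V_def Vsp_Suc by (rule sum.union_disjoint) (auto simp: finite_Vsp)
  also have "\<dots> = inner_V k (sl False x) (sl False y) + inner_V k (sl True x) (sl True y)"
    by (simp add: sum.reindex inner_V_def sl_def)
  finally show ?thesis .
qed

definition nn :: "nat \<Rightarrow> (bool list \<Rightarrow> real) \<Rightarrow> real" where "nn k x = inner_V k x x"

lemma nn_split: "nn (Suc k) x = nn k (sl False x) + nn k (sl True x)"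
  by (simp add: nn_def inner_split)

lemma nn_ge0: "nn k x \<ge> 0"
  by (auto simp: nn_def inner_V_def intro!: sum_nonneg)

lemma nn_0: "nn 0 x = x [] * x []"
  by (simp add: nn_def inner_V_def Vsp_def)

lemma nn_vn[simp]: "nn k (vn x) = nn k x"
  by (simp add: nn_def inner_V_def vn_def)

lemma nn_zz[simp]: "nn k zz = 0" by (simp add: nn_def inner_V_def zz_def)

lemma zz_split: "x [] = 0 \<Longrightarrow> sl False x = zz \<Longrightarrow> sl True x = zz \<Longrightarrow> x = zz"
proof (rule ext)
  fix v assume a: "x [] = 0" "sl False x = zz" "sl True x = zz"
  show "x v = zz v"
  proof (cases v)
    case Nil then show ?thesis using a by simp
  next
    case (Cons b w)
    then show ?thesis using a by (cases b) (auto simp: sl_def zz_def fun_eq_iff)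
  qed
qed

lemma pow_half_le: "(2::real) ^ j / 2 \<le> 4 ^ (j div 2)"
proof -
  define a where "a = j div 2"
  define b where "b = j mod 2"
  have j: "j = 2 * a + b" by (simp add: a_def b_def)
  have e: "(2::real) ^ j = 4 ^ a * 2 ^ b" by (subst j) (simp add: power_add power_mult)
  have "b \<le> 1" by (simp add: b_def)
  then have "(2::real) ^ b \<le> 2" by (cases b) auto
  then have "(2::real) ^ j / 2 \<le> 4 ^ a" unfolding e by simp
  then show ?thesis unfolding a_def .
qed

lemma L_LB: "x \<in> Lset j k \<Longrightarrow> x \<noteq> zz \<Longrightarrow> nn k x \<ge> 2 ^ (k + j) / 2"
proof (induction k arbitrary: j x)
  case 0
  then obtain n where n: "x = (\<lambda>v. if v = [] then 2 ^ (j div 2) * of_int n else 0)" by auto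
  have "n \<noteq> 0" using n 0 by (auto simp: zz_def)
  then have "0 < n * n" by (cases "n > 0") (auto simp: mult_neg_neg)
  then have "1 \<le> n * n" by simp
  then have n1: "(1::real) \<le> of_int n * of_int n" by (metis of_int_1_le_iff of_int_mult)
  have "nn 0 x = (2 ^ (j div 2)) ^ 2 * (of_int n * of_int n)" using n by (simp add: nn_0 power2_eq_square)
  also have "((2::real) ^ (j div 2)) ^ 2 = 4 ^ (j div 2)"
  proof -
    have "((2::real)^(j div 2))^2 = 2^(j div 2 * 2)" by (rule power_mult[symmetric])
    also have "\<dots> = 2^(2 * (j div 2))" by (simp add: mult.commute)
    also have "\<dots> = 4^(j div 2)" by (simp add: power_mult)
    finally show ?thesis .
  qed
  finally have "nn 0 x \<ge> 4 ^ (j div 2)" using n1 by simp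
  then show ?case using pow_half_le[of j] by simp
next
  case (Suc k)
  have x0: "x [] = 0" and F: "sl False x \<in> Lset j k" and T: "sl True x \<in> Lset j k"
    and D: "vm (sl True x) (sl False x) \<in> Lset (Suc j) k" using Suc.prems by auto
  show ?case
  proof (cases "sl False x = zz")
    case True
    then have "sl True x \<noteq> zz" using zz_split x0 Suc.prems by blast
    moreover have "vm (sl True x) (sl False x) = sl True x" using True by (auto simp: vm_def zz_def)
    ultimately have "nn k (sl True x) \<ge> 2 ^ (k + Suc j) / 2" using Suc.IH D by metis
    then show ?thesis using True by (simp add: nn_split)
  next
    case F0: False
    show ?thesis
    proof (cases "sl True x = zz")
      case True
      then have "vm (sl True x) (sl False x) = vn (sl False x)" by (auto simp: vm_def zz_def vn_def)
      moreover have "vn (sl False x) \<noteq> zz" using F0 by (auto simp: vn_def zz_def fun_eq_iff)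
      ultimately have "nn k (vn (sl False x)) \<ge> 2 ^ (k + Suc j) / 2" using Suc.IH D by metis
      then show ?thesis using True by (simp add: nn_split)
    next
      case False
      then have "nn k (sl True x) \<ge> 2 ^ (k + j) / 2" "nn k (sl False x) \<ge> 2 ^ (k + j) / 2"
        using Suc.IH F T F0 by auto
      then show ?thesis by (simp add: nn_split)
    qed
  qed
qed

lemma L_nn0: "x \<in> Lset j k \<Longrightarrow> nn k x = 0 \<Longrightarrow> x = zz"
  using L_LB[of x j k] by (metis divide_pos_pos le_less_trans zero_less_numeral zero_less_power less_irrefl)

lemma par_id: "nn k (vp b (vs 2 z)) + nn k b = 2 * nn k (vp b z) + 2 * nn k z"
proof -
  have "nn k (vp b (vs 2 z)) + nn k b = (\<Sum>v\<in>Vsp k. (b v + 2 * z v) * (b v + 2 * z v) + b v * b v)"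
    by (simp add: nn_def inner_V_def sum.distrib v_apply)
  also have "\<dots> = (\<Sum>v\<in>Vsp k. 2 * ((b v + z v) * (b v + z v)) + 2 * (z v * z v))"
    by (rule sum.cong) (auto simp: algebra_simps)
  also have "\<dots> = 2 * nn k (vp b z) + 2 * nn k z"
    by (simp add: nn_def inner_V_def sum.distrib sum_distrib_left v_apply)
  finally show ?thesis .
qed

lemma Par: assumes "b \<in> Lset j k" "z \<in> Lset j k" "nn k b = 2 ^ (k + j) / 2"
  shows "z = zz \<or> vp b z = zz \<or> nn k (vp b (vs 2 z)) \<ge> 3 * (2 ^ (k + j) / 2)"
proof -
  { assume "z \<noteq> zz" "vp b z \<noteq> zz"
    then have "nn k z \<ge> 2 ^ (k + j) / 2" "nn k (vp b z) \<ge> 2 ^ (k + j) / 2"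
      using L_LB assms L_add by auto
    then have ?thesis using par_id[of k b z] assms(3) by linarith }
  then show ?thesis by blast
qed

lemma ParN: assumes "b \<in> Lset j k" "z \<in> Lset j k" "nn k b = 2 ^ (k + j) / 2"
  shows "nn k (vp b (vs 2 z)) = 2 ^ (k + j) / 2 \<or> nn k (vp b (vs 2 z)) \<ge> 3 * (2 ^ (k + j) / 2)"
proof -
  have "vp b (vs 2 z) = b" if "z = zz" using that by (auto simp: fun_eq_iff v_apply)
  moreover have "vp b (vs 2 z) = vn b" if "vp b z = zz"
  proof -
    from that have "z v = - b v" for v by (auto simp: fun_eq_iff v_apply) (metis add_eq_0_iff)
    then show ?thesis by (simp add: fun_eq_iff v_apply)
  qed
  ultimately show ?thesis using Par[OF assms] assms(3) by auto
qed

definition Good :: "nat \<Rightarrow> ((bool list \<Rightarrow> real) \<Rightarrow> (bool list \<Rightarrow> real)) \<Rightarrow> bool" where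
  "Good k g \<longleftrightarrow> (\<forall>j x. x \<in> Lset j k \<longrightarrow> g x \<in> Lset j k \<and> vm (g x) x \<in> Lset (Suc j) k) \<and>
     (\<forall>x y. g (vm x y) = vm (g x) (g y)) \<and> (\<forall>x. nn k (g x) = nn k x)"

lemma GoodD: assumes "Good k g"
  shows "x \<in> Lset j k \<Longrightarrow> g x \<in> Lset j k" "x \<in> Lset j k \<Longrightarrow> vm (g x) x \<in> Lset (Suc j) k"
    "g (vm x y) = vm (g x) (g y)" "nn k (g x) = nn k x"
  using assms by (auto simp: Good_def)

lemma Good_zz: "Good k g \<Longrightarrow> g zz = zz"
proof -
  assume g: "Good k g"
  have "vm zz zz = zz" by (simp add: fun_eq_iff v_apply)
  then have "g zz = vm (g zz) (g zz)" using GoodD(3)[OF g, of zz zz] by simp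
  then show ?thesis by (auto simp: fun_eq_iff v_apply)
qed

lemma Good_id: "Good k id"
proof -
  have "vm x x = zz" for x by (simp add: fun_eq_iff v_apply)
  then show ?thesis by (auto simp: Good_def L_zero)
qed

lemma Good_neg: "Good k vn"
proof -
  have "vm (vn x) x = vn (vs 2 x)" for x by (simp add: fun_eq_iff v_apply)
  moreover have "vn (vm x y) = vm (vn x) (vn y)" for x y by (simp add: fun_eq_iff v_apply)
  moreover have "vn (vs 2 x) \<in> Lset (Suc j) k" if "x \<in> Lset j k" for x j
    using L_neg[OF L_mono[OF L_dbl[OF that]]] .
  ultimately show ?thesis by (auto simp: Good_def L_neg)
qed

lemma Good_comp: assumes f: "Good k f" and g: "Good k g" shows "Good k (f \<circ> g)"
proof -
  have "vm (f (g x)) x = vp (vm (f (g x)) (g x)) (vm (g x) x)" for x by (simp add: fun_eq_iff v_apply)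
  then show ?thesis using GoodD[OF f] GoodD[OF g] by (auto simp: Good_def L_add)
qed

definition lift :: "((bool list \<Rightarrow> real) \<Rightarrow> (bool list \<Rightarrow> real)) \<Rightarrow> (bool list \<Rightarrow> real) \<Rightarrow> (bool list \<Rightarrow> real)" where
  "lift g x = (\<lambda>v. case v of [] \<Rightarrow> 0 | b # w \<Rightarrow> g (sl b x) w)"
definition swp :: "(bool list \<Rightarrow> real) \<Rightarrow> (bool list \<Rightarrow> real)" where
  "swp x = (\<lambda>v. case v of [] \<Rightarrow> 0 | b # w \<Rightarrow> x ((\<not> b) # w))"
definition sg2 :: "(bool list \<Rightarrow> real) \<Rightarrow> (bool list \<Rightarrow> real)" where
  "sg2 x = (\<lambda>v. case v of [] \<Rightarrow> 0 | b # w \<Rightarrow> (if b then - x (b # w) else x (b # w)))"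

lemma lift_simps[simp]: "lift g x [] = 0" "sl b (lift g x) = g (sl b x)"
  by (auto simp: lift_def sl_def)
lemma swp_simps[simp]: "swp x [] = 0" "sl False (swp x) = sl True x" "sl True (swp x) = sl False x"
  by (auto simp: swp_def sl_def)
lemma sg2_simps[simp]: "sg2 x [] = 0" "sl False (sg2 x) = sl False x" "sl True (sg2 x) = vn (sl True x)"
  by (auto simp: sg2_def sl_def vn_def)

lemma fun_split_eq: "x [] = y [] \<Longrightarrow> sl False x = sl False y \<Longrightarrow> sl True x = sl True y \<Longrightarrow> x = y"
proof (rule ext)
  fix v assume a: "x [] = y []" "sl False x = sl False y" "sl True x = sl True y"
  show "x v = y v"
  proof (cases v)
    case Nil then show ?thesis using a by simp
  next
    case (Cons b w) then show ?thesis using a by (cases b) (auto simp: sl_def fun_eq_iff)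
  qed
qed

lemma Good_lift: assumes g: "Good k g" shows "Good (Suc k) (lift g)"
proof -
  note G = GoodD[OF g]
  have A: "lift g x \<in> Lset j (Suc k) \<and> vm (lift g x) x \<in> Lset (Suc j) (Suc k)" if x: "x \<in> Lset j (Suc k)" for j x
  proof -
    have x1: "x [] = 0" "sl False x \<in> Lset j k" "sl True x \<in> Lset j k"
      "vm (sl True x) (sl False x) \<in> Lset (Suc j) k" using x by auto
    have "vm (g (sl True x)) (g (sl False x)) = g (vm (sl True x) (sl False x))" using G(3) by simp
    then have c1: "lift g x \<in> Lset j (Suc k)" using x1 G(1) by auto
    have "vm (vm (g (sl True x)) (sl True x)) (vm (g (sl False x)) (sl False x))
        = vm (g (vm (sl True x) (sl False x))) (vm (sl True x) (sl False x))"
      using G(3) by (simp add: fun_eq_iff v_apply)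
    then have c2: "vm (lift g x) x \<in> Lset (Suc j) (Suc k)" using x1 G(1,2) by auto
    show ?thesis using c1 c2 by blast
  qed
  have B: "lift g (vm x y) = vm (lift g x) (lift g y)" for x y
    by (rule fun_split_eq) (simp_all add: G(3))
  have C: "nn (Suc k) (lift g x) = nn (Suc k) x" for x by (simp add: nn_split G(4))
  show ?thesis using A B C by (auto simp: Good_def)
qed

lemma Good_swp: "Good (Suc k) swp"
proof -
  have A: "swp x \<in> Lset j (Suc k) \<and> vm (swp x) x \<in> Lset (Suc j) (Suc k)" if x: "x \<in> Lset j (Suc k)" for j x
  proof -
    let ?D = "vm (sl True x) (sl False x)"
    have x1: "x [] = 0" "sl False x \<in> Lset j k" "sl True x \<in> Lset j k"
      "?D \<in> Lset (Suc j) k" using x by auto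
    have e1: "vm (sl False x) (sl True x) = vn ?D" by (simp add: fun_eq_iff v_apply)
    have e2: "vm (vn ?D) ?D = vn (vs 2 ?D)" by (simp add: fun_eq_iff v_apply)
    have "vs 2 ?D \<in> Lset (Suc (Suc j)) k" using L_mono[OF L_dbl[OF x1(4)]] .
    then show ?thesis using x1 e1 e2 L_neg by auto
  qed
  have B: "swp (vm x y) = vm (swp x) (swp y)" for x y by (rule fun_split_eq) simp_all
  have C: "nn (Suc k) (swp x) = nn (Suc k) x" for x by (simp add: nn_split)
  show ?thesis using A B C by (auto simp: Good_def)
qed

lemma Good_sg2: "Good (Suc k) sg2"
proof -
  have A: "sg2 x \<in> Lset j (Suc k) \<and> vm (sg2 x) x \<in> Lset (Suc j) (Suc k)" if x: "x \<in> Lset j (Suc k)" for j x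
  proof -
    let ?D = "vm (sl True x) (sl False x)"
    have x1: "x [] = 0" "sl False x \<in> Lset j k" "sl True x \<in> Lset j k"
      "?D \<in> Lset (Suc j) k" using x by auto
    have e1: "vm (vn (sl True x)) (sl False x) = vm (vn ?D) (vs 2 (sl False x))"
      by (simp add: fun_eq_iff v_apply)
    have m1: "vs 2 (sl False x) \<in> Lset (Suc j) k" using L_mono[OF L_dbl[OF x1(2)]] .
    have c1: "sg2 x \<in> Lset j (Suc k)" using x1 e1 m1 L_neg L_sub by auto
    have e2: "vm (sl False x) (sl False x) = zz" by (simp add: fun_eq_iff v_apply)
    have e3: "vm (vn (sl True x)) (sl True x) = vn (vs 2 (sl True x))" by (simp add: fun_eq_iff v_apply)
    have e4: "vm (vn (vs 2 (sl True x))) zz = vn (vs 2 (sl True x))" by (simp add: fun_eq_iff v_apply)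
    have m2: "vs 2 (sl True x) \<in> Lset (Suc (Suc j)) k" using L_dbl[OF x1(3)] .
    have c2: "vm (sg2 x) x \<in> Lset (Suc j) (Suc k)"
      using x1 e2 e3 e4 m2 L_neg[OF m2] L_neg[OF L_mono[OF m2]] L_zero by auto
    show ?thesis using c1 c2 by blast
  qed
  have B: "sg2 (vm x y) = vm (sg2 x) (sg2 y)" for x y
    by (rule fun_split_eq) (simp_all add: fun_eq_iff v_apply)
  have C: "nn (Suc k) (sg2 x) = nn (Suc k) x" for x by (simp add: nn_split)
  show ?thesis using A B C by (auto simp: Good_def)
qed

lemma vn_vn[simp]: "vn (vn x) = x" by (simp add: fun_eq_iff v_apply)
lemma vm_zz[simp]: "vm x zz = x" "vm zz x = vn x" "vp zz x = x" "vp x zz = x" "vn zz = zz"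
  by (simp_all add: fun_eq_iff v_apply)
lemma vn_vm: "vn (vm x y) = vm y x" by (simp add: fun_eq_iff v_apply)

lemma L_neg_iff: "vn x \<in> Lset j k \<longleftrightarrow> x \<in> Lset j k"
  using L_neg[of x] L_neg[of "vn x"] by auto

lemma sq_eq: "(x::real) * x = y * y \<Longrightarrow> y = x \<or> y = - x"
  using square_eq_iff by metis

lemma R_base: assumes "a \<in> Lset j 0" "p \<in> Lset j 0" "nn 0 a = nn 0 p"
  shows "\<exists>g. Good 0 g \<and> p = g a"
proof -
  obtain n where n: "a = (\<lambda>v. if v = [] then 2 ^ (j div 2) * of_int n else 0)" using assms by auto
  obtain m where m: "p = (\<lambda>v. if v = [] then 2 ^ (j div 2) * of_int m else 0)" using assms by auto
  have "p [] = a [] \<or> p [] = - a []" using assms(3) sq_eq by (simp add: nn_0)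
  then show ?thesis
  proof
    assume "p [] = a []"
    then have "p = id a" using n m by (auto simp: fun_eq_iff)
    then show ?thesis using Good_id by blast
  next
    assume "p [] = - a []"
    then have "p = vn a" using n m by (auto simp: fun_eq_iff v_apply)
    then show ?thesis using Good_neg by blast
  qed
qed

lemma R: "a \<in> Lset j k \<Longrightarrow> p \<in> Lset j k \<Longrightarrow> nn k a = 2 ^ (k + j) / 2 \<Longrightarrow> nn k p = 2 ^ (k + j) / 2
  \<Longrightarrow> vm p a \<in> Lset (Suc j) k \<Longrightarrow> \<exists>g. Good k g \<and> p = g a"
proof (induction k arbitrary: j a p)
  case 0
  then show ?case using R_base by simp
next
  case (Suc k)
  define \<mu> :: real where "\<mu> = 2 ^ (k + j) / 2"
  have \<mu>pos: "\<mu> > 0" by (simp add: \<mu>_def)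
  have \<mu>S: "(2::real) ^ (k + Suc j) / 2 = 2 * \<mu>" "(2::real) ^ (Suc k + j) / 2 = 2 * \<mu>" by (simp_all add: \<mu>_def)
  define \<alpha> where "\<alpha> = sl False a"
  define \<alpha>' where "\<alpha>' = sl True a"
  define \<pi> where "\<pi> = sl False p"
  define \<pi>' where "\<pi>' = sl True p"
  have a: "a [] = 0" "\<alpha> \<in> Lset j k" "\<alpha>' \<in> Lset j k" "vm \<alpha>' \<alpha> \<in> Lset (Suc j) k"
    using Suc.prems(1) by (auto simp: \<alpha>_def \<alpha>'_def)
  have p: "p [] = 0" "\<pi> \<in> Lset j k" "\<pi>' \<in> Lset j k" "vm \<pi>' \<pi> \<in> Lset (Suc j) k"
    using Suc.prems(2) by (auto simp: \<pi>_def \<pi>'_def)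
  have d: "vm \<pi> \<alpha> \<in> Lset (Suc j) k" "vm \<pi>' \<alpha>' \<in> Lset (Suc j) k"
    "vm (vm \<pi>' \<alpha>') (vm \<pi> \<alpha>) \<in> Lset (Suc (Suc j)) k"
    using Suc.prems(5) by (auto simp: \<alpha>_def \<alpha>'_def \<pi>_def \<pi>'_def)
  have na: "nn k \<alpha> + nn k \<alpha>' = 2 * \<mu>" using Suc.prems(3) \<mu>S by (simp add: nn_split \<alpha>_def \<alpha>'_def)
  have np: "nn k \<pi> + nn k \<pi>' = 2 * \<mu>" using Suc.prems(4) \<mu>S by (simp add: nn_split \<pi>_def \<pi>'_def)
  have LB1: "nn k x \<ge> 2 * \<mu>" if "x \<in> Lset (Suc j) k" "x \<noteq> zz" for x
    using L_LB[OF that] \<mu>S by simp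
  have LB0: "nn k x \<ge> \<mu>" if "x \<in> Lset j k" "x \<noteq> zz" for x
    using L_LB[OF that] by (simp add: \<mu>_def)
  show ?case
  proof (cases "\<alpha> = zz")
    case A0: True
    have a'1: "\<alpha>' \<in> Lset (Suc j) k" using a(4) A0 by simp
    have na': "nn k \<alpha>' = 2 ^ (k + Suc j) / 2" using na A0 \<mu>S by simp
    have p1: "\<pi> \<in> Lset (Suc j) k" using d(1) A0 by simp
    have p2: "\<pi>' \<in> Lset (Suc j) k"
    proof -
      have "\<pi>' = vp (vm \<pi>' \<alpha>') \<alpha>'" by (simp add: fun_eq_iff v_apply)
      then show ?thesis using L_add[OF d(2) a'1] by simp
    qed
    have "\<pi> = zz \<or> \<pi>' = zz"
    proof (rule ccontr)
      assume "\<not> ?thesis"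
      then have "nn k \<pi> \<ge> 2 * \<mu>" "nn k \<pi>' \<ge> 2 * \<mu>" using LB1 p1 p2 by auto
      then show False using np \<mu>pos by linarith
    qed
    then show ?thesis
    proof
      assume P0: "\<pi> = zz"
      have h2: "nn k \<pi>' = 2 ^ (k + Suc j) / 2" using np P0 \<mu>S by simp
      have h3: "vm \<pi>' \<alpha>' \<in> Lset (Suc (Suc j)) k" using d(3) A0 P0 by simp
      obtain g' where g': "Good k g'" "\<pi>' = g' \<alpha>'" using Suc.IH[OF a'1 p2 na' h2 h3] by blast
      have e1: "sl False p = sl False (lift g' a)" using P0 A0 Good_zz[OF g'(1)] by (simp add: \<alpha>_def \<pi>_def)
      have e2: "sl True p = sl True (lift g' a)" using g'(2) by (simp add: \<alpha>'_def \<pi>'_def)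
      have "p = lift g' a" using fun_split_eq[OF _ e1 e2] p(1) by simp
      then show ?thesis using Good_lift[OF g'(1)] by blast
    next
      assume P0: "\<pi>' = zz"
      have h2: "nn k \<pi> = 2 ^ (k + Suc j) / 2" using np P0 \<mu>S by simp
      have h3: "vm \<pi> (vn \<alpha>') \<in> Lset (Suc (Suc j)) k"
        using L_neg[OF d(3)] A0 P0 by (simp add: vn_vm)
      have h1: "vn \<alpha>' \<in> Lset (Suc j) k" using L_neg[OF a'1] .
      have h4: "nn k (vn \<alpha>') = 2 ^ (k + Suc j) / 2" using na' by simp
      obtain g' where g': "Good k g'" "\<pi> = g' (vn \<alpha>')" using Suc.IH[OF h1 p1 h4 h2 h3] by blast
      have G: "Good k (g' \<circ> vn)" using Good_comp[OF g'(1) Good_neg] .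
      have e1: "sl False p = sl False ((swp \<circ> lift (g' \<circ> vn)) a)" using g'(2) by (simp add: \<alpha>'_def \<pi>_def)
      have e2: "sl True p = sl True ((swp \<circ> lift (g' \<circ> vn)) a)"
        using P0 A0 Good_zz[OF G] by (simp add: \<alpha>_def \<pi>'_def)
      have "p = (swp \<circ> lift (g' \<circ> vn)) a" using fun_split_eq[OF _ e1 e2] p(1) by simp
      then show ?thesis using Good_comp[OF Good_swp Good_lift[OF G]] by blast
    qed
  next
    case A0: False
    show ?thesis
    proof (cases "\<alpha>' = zz")
      case A1: True
      have a1: "\<alpha> \<in> Lset (Suc j) k" using a(4) A1 L_neg_iff by simp
      have na1: "nn k \<alpha> = 2 ^ (k + Suc j) / 2" using na A1 \<mu>S by simp
      have p2: "\<pi>' \<in> Lset (Suc j) k" using d(2) A1 by simp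
      have p1: "\<pi> \<in> Lset (Suc j) k"
      proof -
        have "\<pi> = vp (vm \<pi> \<alpha>) \<alpha>" by (simp add: fun_eq_iff v_apply)
        then show ?thesis using L_add[OF d(1) a1] by simp
      qed
      have "\<pi> = zz \<or> \<pi>' = zz"
      proof (rule ccontr)
        assume "\<not> ?thesis"
        then have "nn k \<pi> \<ge> 2 * \<mu>" "nn k \<pi>' \<ge> 2 * \<mu>" using LB1 p1 p2 by auto
        then show False using np \<mu>pos by linarith
      qed
      then show ?thesis
      proof
        assume P0: "\<pi>' = zz"
        have h2: "nn k \<pi> = 2 ^ (k + Suc j) / 2" using np P0 \<mu>S by simp
        have h3: "vm \<pi> \<alpha> \<in> Lset (Suc (Suc j)) k" using d(3) A1 P0 L_neg_iff by simp
        obtain g' where g': "Good k g'" "\<pi> = g' \<alpha>" using Suc.IH[OF a1 p1 na1 h2 h3] by blast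
        have e1: "sl False p = sl False (lift g' a)" using g'(2) by (simp add: \<alpha>_def \<pi>_def)
        have e2: "sl True p = sl True (lift g' a)" using P0 A1 Good_zz[OF g'(1)] by (simp add: \<alpha>'_def \<pi>'_def)
        have "p = lift g' a" using fun_split_eq[OF _ e1 e2] p(1) by simp
        then show ?thesis using Good_lift[OF g'(1)] by blast
      next
        assume P0: "\<pi> = zz"
        have h2: "nn k \<pi>' = 2 ^ (k + Suc j) / 2" using np P0 \<mu>S by simp
        have h3: "vm \<pi>' (vn \<alpha>) \<in> Lset (Suc (Suc j)) k"
        proof -
          have "vm \<pi>' (vn \<alpha>) = vm (vm \<pi>' \<alpha>') (vm \<pi> \<alpha>)" using A1 P0 by (simp add: fun_eq_iff v_apply)
          then show ?thesis using d(3) by simp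
        qed
        have h1: "vn \<alpha> \<in> Lset (Suc j) k" using L_neg[OF a1] .
        have h4: "nn k (vn \<alpha>) = 2 ^ (k + Suc j) / 2" using na1 by simp
        obtain g' where g': "Good k g'" "\<pi>' = g' (vn \<alpha>)" using Suc.IH[OF h1 p2 h4 h2 h3] by blast
        have G: "Good k (g' \<circ> vn)" using Good_comp[OF g'(1) Good_neg] .
        have e1: "sl False p = sl False ((swp \<circ> lift (g' \<circ> vn)) a)"
          using P0 A1 Good_zz[OF G] by (simp add: \<alpha>'_def \<pi>_def)
        have e2: "sl True p = sl True ((swp \<circ> lift (g' \<circ> vn)) a)" using g'(2) by (simp add: \<alpha>_def \<pi>'_def)
        have "p = (swp \<circ> lift (g' \<circ> vn)) a" using fun_split_eq[OF _ e1 e2] p(1) by simp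
        then show ?thesis using Good_comp[OF Good_swp Good_lift[OF G]] by blast
      qed
    next
      case A1: False
      have "nn k \<alpha> \<ge> \<mu>" "nn k \<alpha>' \<ge> \<mu>" using LB0 a A0 A1 by auto
      then have na2: "nn k \<alpha> = \<mu>" "nn k \<alpha>' = \<mu>" using na by linarith+
      have P0: "\<pi> \<noteq> zz"
      proof
        assume "\<pi> = zz"
        then have "vn \<alpha> \<in> Lset (Suc j) k" using d(1) by simp
        then have "nn k \<alpha> \<ge> 2 * \<mu>" using LB1[of "vn \<alpha>"] A0 by (auto simp: fun_eq_iff v_apply)
        then show False using na2 \<mu>pos by linarith
      qed
      have P1: "\<pi>' \<noteq> zz"
      proof
        assume "\<pi>' = zz"
        then have "vn \<alpha>' \<in> Lset (Suc j) k" using d(2) by simp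
        then have "nn k \<alpha>' \<ge> 2 * \<mu>" using LB1[of "vn \<alpha>'"] A1 by (auto simp: fun_eq_iff v_apply)
        then show False using na2 \<mu>pos by linarith
      qed
      have "nn k \<pi> \<ge> \<mu>" "nn k \<pi>' \<ge> \<mu>" using LB0 p P0 P1 by auto
      then have np2: "nn k \<pi> = \<mu>" "nn k \<pi>' = \<mu>" using np by linarith+
      have h1: "nn k \<alpha> = 2 ^ (k + j) / 2" "nn k \<pi> = 2 ^ (k + j) / 2" using na2 np2 by (simp_all add: \<mu>_def)
      obtain g' where g': "Good k g'" "\<pi> = g' \<alpha>" using Suc.IH[OF a(2) p(2) h1 d(1)] by blast
      have G1: "Good (Suc k) (lift g')" using Good_lift[OF g'(1)] .
      have "vm p (lift g' a) = vm (vm p a) (vm (lift g' a) a)" by (simp add: fun_eq_iff v_apply)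
      then have "vm p (lift g' a) \<in> Lset (Suc j) (Suc k)"
        using L_sub[OF Suc.prems(5) GoodD(2)[OF G1 Suc.prems(1)]] by simp
      then have m: "vm (sl True (vm p (lift g' a))) (sl False (vm p (lift g' a))) \<in> Lset (Suc (Suc j)) k"
        by simp
      have s0: "sl False (vm p (lift g' a)) = zz" using g'(2) by (simp add: \<alpha>_def \<pi>_def fun_eq_iff v_apply)
      have s1: "sl True (vm p (lift g' a)) = vm \<pi>' (g' \<alpha>')" by (simp add: \<alpha>'_def \<pi>'_def)
      have dd: "vm \<pi>' (g' \<alpha>') \<in> Lset (Suc (Suc j)) k" using m unfolding s0 s1 by simp
      define b where "b = g' \<alpha>'"
      have b: "b \<in> Lset j k" "nn k b = 2 ^ (k + j) / 2" using GoodD[OF g'(1)] a(3) na2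
        by (auto simp: b_def \<mu>_def)
      define z where "z = vs (1/2) (vm \<pi>' b)"
      have z: "z \<in> Lset j k" using L_half dd by (simp add: z_def b_def)
      have pz: "\<pi>' = vp b (vs 2 z)" by (rule ext) (simp add: z_def v_apply field_simps)
      have "z = zz \<or> vp b z = zz \<or> nn k (vp b (vs 2 z)) \<ge> 3 * (2 ^ (k + j) / 2)" using Par[OF b(1) z b(2)] .
      moreover have "\<not> nn k (vp b (vs 2 z)) \<ge> 3 * (2 ^ (k + j) / 2)" using np2 pz \<mu>pos by (simp add: \<mu>_def)
      ultimately have "\<pi>' = b \<or> \<pi>' = vn b"
      proof (elim disjE)
        assume "z = zz" then show ?thesis using pz by (simp add: fun_eq_iff v_apply)
      next
        assume zb: "vp b z = zz"
        have "z v = - b v" for v using fun_cong[OF zb, of v] by (simp add: v_apply)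
        then show ?thesis using pz by (simp add: fun_eq_iff v_apply)
      qed simp
      then show ?thesis
      proof
        assume pb: "\<pi>' = b"
        have e1: "sl False p = sl False (lift g' a)" using g'(2) by (simp add: \<alpha>_def \<pi>_def)
        have e2: "sl True p = sl True (lift g' a)" using pb by (simp add: \<alpha>'_def \<pi>'_def b_def)
        have "p = lift g' a" using fun_split_eq[OF _ e1 e2] p(1) by simp
        then show ?thesis using G1 by blast
      next
        assume pb: "\<pi>' = vn b"
        have e1: "sl False p = sl False ((sg2 \<circ> lift g') a)" using g'(2) by (simp add: \<alpha>_def \<pi>_def)
        have e2: "sl True p = sl True ((sg2 \<circ> lift g') a)" using pb by (simp add: \<alpha>'_def \<pi>'_def b_def)
        have "p = (sg2 \<circ> lift g') a" using fun_split_eq[OF _ e1 e2] p(1) by simp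
        then show ?thesis using Good_comp[OF Good_sg2 G1] by blast
      qed
    qed
  qed
qed

lemma odd_sq: "odd (t::int) \<Longrightarrow> t * t = 1 \<or> t * t \<ge> 9"
proof -
  assume o: "odd t"
  then have "t = 1 \<or> t = -1 \<or> t \<ge> 3 \<or> t \<le> -3" by presburger
  then show ?thesis
  proof (elim disjE)
    assume "t \<ge> 3"
    then have "t * t \<ge> 3 * 3" using mult_mono[of 3 t 3 t] by simp
    then show ?thesis by simp
  next
    assume "t \<le> -3"
    then have "(-t) * (-t) \<ge> 3 * 3" using mult_mono[of 3 "-t" 3 "-t"] by simp
    then show ?thesis by simp
  qed simp_all
qed

lemma P_base: assumes "l \<in> Lset j 0" "nn 0 l = 2 ^ (0 + j) / 2" "d \<in> Lset (Suc j) 0"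
  shows "nn 0 (vp l d) = nn 0 l \<or> nn 0 (vp l d) \<ge> 2 ^ (0 + j)"
proof -
  obtain n where n: "l = (\<lambda>v. if v = [] then 2 ^ (j div 2) * of_int n else 0)" using assms by auto
  obtain n' where n': "d = (\<lambda>v. if v = [] then 2 ^ (Suc j div 2) * of_int n' else 0)" using assms by auto
  obtain i where ji: "j = 2 * i \<or> j = 2 * i + 1" by (metis dvd_mult_div_cancel odd_two_times_div_two_succ mult.commute)
  have q4: "((2::real) ^ i) ^ 2 = 4 ^ i"
  proof -
    have "((2::real)^i)^2 = 2^(i * 2)" by (rule power_mult[symmetric])
    also have "\<dots> = 2^(2 * i)" by (simp add: mult.commute)
    also have "\<dots> = 4^i" by (simp add: power_mult)
    finally show ?thesis .
  qed
  have q4': "(2::real) ^ (2 * i) = 4 ^ i" by (simp add: power_mult)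
  from ji show ?thesis
  proof
    assume j: "j = 2 * i"
    have "nn 0 l = (2 ^ i) ^ 2 * (of_int n * of_int n)" using n j by (simp add: nn_0 power2_eq_square)
    then have "4 ^ i * (of_int n * of_int n) = (4::real) ^ i / 2" using assms(2) j q4 q4' by simp
    then have "of_int (2 * (n * n)) = (1::real)" by simp
    then have "2 * (n * n) = 1" by (metis of_int_eq_1_iff)
    then have False by presburger
    then show ?thesis ..
  next
    assume j: "j = 2 * i + 1"
    have jd: "j div 2 = i" "Suc j div 2 = Suc i" using j by simp_all
    have "nn 0 l = (2 ^ i) ^ 2 * (of_int n * of_int n)" using n jd by (simp add: nn_0 power2_eq_square)
    then have "4 ^ i * (of_int n * of_int n) = (4::real) ^ i" using assms(2) j q4 q4' by simp
    then have "of_int (n * n) = (1::real)" by simp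
    then have nn1: "n * n = 1" by (metis of_int_eq_1_iff)
    then have "odd n" by (metis odd_one even_mult_iff)
    then have "odd (n + 2 * n')" by simp
    then have t: "(n + 2 * n') * (n + 2 * n') = 1 \<or> (n + 2 * n') * (n + 2 * n') \<ge> 9" by (rule odd_sq)
    have xv: "vp l d [] = 2 ^ i * of_int (n + 2 * n')" using n n' jd by (simp add: algebra_simps)
    have nx: "nn 0 (vp l d) = 4 ^ i * of_int ((n + 2 * n') * (n + 2 * n'))"
      unfolding nn_0 xv using q4 by (simp add: power2_eq_square algebra_simps)
    have nl: "nn 0 l = 4 ^ i" using assms(2) j q4' by simp
    from t show ?thesis
    proof
      assume "(n + 2 * n') * (n + 2 * n') = 1"
      then show ?thesis using nx nl by simp
    next
      assume "(n + 2 * n') * (n + 2 * n') \<ge> 9"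
      then have "of_int ((n + 2 * n') * (n + 2 * n')) \<ge> (9::real)" by linarith
      then have "nn 0 (vp l d) \<ge> 4 ^ i * 9" unfolding nx by simp
      moreover have "(2::real) ^ (0 + j) = 2 * 4 ^ i" using j q4' by simp
      moreover have "(0::real) \<le> 4 ^ i" by simp
      ultimately show ?thesis by linarith
    qed
  qed
qed

lemma P: "l \<in> Lset j k \<Longrightarrow> nn k l = 2 ^ (k + j) / 2 \<Longrightarrow> d \<in> Lset (Suc j) k \<Longrightarrow>
  nn k (vp l d) = nn k l \<or> nn k (vp l d) \<ge> 2 ^ (k + j)"
proof (induction k arbitrary: j l d)
  case 0
  then show ?case using P_base by simp
next
  case (Suc k)
  define \<mu> :: real where "\<mu> = 2 ^ (k + j) / 2"
  have \<mu>pos: "\<mu> > 0" by (simp add: \<mu>_def)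
  have \<mu>S: "(2::real) ^ (k + Suc j) / 2 = 2 * \<mu>" "(2::real) ^ (Suc k + j) / 2 = 2 * \<mu>"
    "(2::real) ^ (k + Suc j) = 4 * \<mu>" "(2::real) ^ (Suc k + j) = 4 * \<mu>" "(2::real) ^ (k + j) = 2 * \<mu>"
    by (simp_all add: \<mu>_def)
  define a where "a = sl False l"
  define a' where "a' = sl True l"
  define e where "e = sl False d"
  define e' where "e' = sl True d"
  have l: "a \<in> Lset j k" "a' \<in> Lset j k" "vm a' a \<in> Lset (Suc j) k"
    using Suc.prems(1) by (auto simp: a_def a'_def)
  have d: "e \<in> Lset (Suc j) k" "e' \<in> Lset (Suc j) k" "vm e' e \<in> Lset (Suc (Suc j)) k"
    using Suc.prems(3) by (auto simp: e_def e'_def)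
  define pp where "pp = vp a e"
  define qq where "qq = vp a' e'"
  have nx: "nn (Suc k) (vp l d) = nn k pp + nn k qq"
    by (simp add: nn_split pp_def qq_def a_def a'_def e_def e'_def)
  have nl: "nn (Suc k) l = nn k a + nn k a'" by (simp add: nn_split a_def a'_def)
  have na: "nn k a + nn k a' = 2 * \<mu>" using Suc.prems(2) nl \<mu>S by simp
  have LB1: "nn k x \<ge> 2 * \<mu>" if "x \<in> Lset (Suc j) k" "x \<noteq> zz" for x
    using L_LB[OF that] \<mu>S by simp
  have LB0: "nn k x \<ge> \<mu>" if "x \<in> Lset j k" "x \<noteq> zz" for x
    using L_LB[OF that] by (simp add: \<mu>_def)
  have goal: "nn k pp + nn k qq = nn k a + nn k a' \<or> nn k pp + nn k qq \<ge> 4 * \<mu>"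
  proof (cases "a = zz")
    case A0: True
    have a'1: "a' \<in> Lset (Suc j) k" using l(3) A0 by simp
    have na': "nn k a' = 2 ^ (k + Suc j) / 2" using na A0 \<mu>S by simp
    have p1: "pp \<in> Lset (Suc j) k" using d(1) A0 by (simp add: pp_def)
    have q1: "qq \<in> Lset (Suc j) k" using L_add[OF a'1 d(2)] by (simp add: qq_def)
    consider "pp = zz" | "qq = zz" | "pp \<noteq> zz" "qq \<noteq> zz" by blast
    then show ?thesis
    proof cases
      case 1
      then have "e = zz" using A0 by (simp add: pp_def)
      then have "e' \<in> Lset (Suc (Suc j)) k" using d(3) by simp
      from Suc.IH[OF a'1 na' this] show ?thesis using 1 A0 \<mu>S by (simp add: qq_def)
    next
      case 2
      have h1: "vn a' \<in> Lset (Suc j) k" using L_neg[OF a'1] .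
      have h2: "nn k (vn a') = 2 ^ (k + Suc j) / 2" using na' by simp
      have ee: "vp e a' = vn (vm e' e)" using fun_cong[OF 2[unfolded qq_def]]
        by (simp add: fun_eq_iff v_apply) (metis add.commute add_eq_0_iff)
      have h3: "vp e a' \<in> Lset (Suc (Suc j)) k" using L_neg[OF d(3)] ee by simp
      have "vp (vn a') (vp e a') = pp" using A0 by (simp add: pp_def fun_eq_iff v_apply)
      then show ?thesis using Suc.IH[OF h1 h2 h3] 2 A0 \<mu>S by simp
    next
      case 3
      have "nn k pp \<ge> 2 * \<mu>" "nn k qq \<ge> 2 * \<mu>" using LB1 p1 q1 3 by auto
      then show ?thesis by linarith
    qed
  next
    case A0: False
    show ?thesis
    proof (cases "a' = zz")
      case A1: True
      have a1: "a \<in> Lset (Suc j) k" using l(3) A1 L_neg_iff by simp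
      have na1: "nn k a = 2 ^ (k + Suc j) / 2" using na A1 \<mu>S by simp
      have p1: "pp \<in> Lset (Suc j) k" using L_add[OF a1 d(1)] by (simp add: pp_def)
      have q1: "qq \<in> Lset (Suc j) k" using d(2) A1 by (simp add: qq_def)
      consider "qq = zz" | "pp = zz" | "pp \<noteq> zz" "qq \<noteq> zz" by blast
      then show ?thesis
      proof cases
        case 1
        then have "e' = zz" using A1 by (simp add: qq_def)
        then have "e \<in> Lset (Suc (Suc j)) k" using d(3) L_neg_iff by simp
        from Suc.IH[OF a1 na1 this] show ?thesis using 1 A1 \<mu>S by (simp add: pp_def)
      next
        case 2
        have h1: "vn a \<in> Lset (Suc j) k" using L_neg[OF a1] .
        have h2: "nn k (vn a) = 2 ^ (k + Suc j) / 2" using na1 by simp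
        have ee: "e v = - a v" for v using fun_cong[OF 2[unfolded pp_def], of v]
          by (simp add: v_apply add_eq_0_iff)
        have "vp (vn a) (vm e' e) = qq" using A1 ee by (simp add: qq_def fun_eq_iff v_apply)
        then show ?thesis using Suc.IH[OF h1 h2 d(3)] 2 A1 \<mu>S by simp
      next
        case 3
        have "nn k pp \<ge> 2 * \<mu>" "nn k qq \<ge> 2 * \<mu>" using LB1 p1 q1 3 by auto
      then show ?thesis by linarith
      qed
    next
      case A1: False
      have "nn k a \<ge> \<mu>" "nn k a' \<ge> \<mu>" using LB0 l A0 A1 by auto
      then have na2: "nn k a = \<mu>" "nn k a' = \<mu>" using na by linarith+
      have na3: "nn k a = 2 ^ (k + j) / 2" "nn k a' = 2 ^ (k + j) / 2" using na2 by (simp_all add: \<mu>_def)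
      have e0: "e \<in> Lset j k" "e' \<in> Lset j k" using L_mono d by auto
      have pL: "pp \<in> Lset j k" "qq \<in> Lset j k" using L_add l e0 by (auto simp: pp_def qq_def)
      have IP: "nn k pp = \<mu> \<or> nn k pp \<ge> 2 * \<mu>" using Suc.IH[OF l(1) na3(1) d(1)] na2 \<mu>S by (simp add: pp_def)
      have IQ: "nn k qq = \<mu> \<or> nn k qq \<ge> 2 * \<mu>" using Suc.IH[OF l(2) na3(2) d(2)] na2 \<mu>S by (simp add: qq_def)
      have vaa: "vm a a' \<in> Lset (Suc j) k" using L_neg[OF l(3)] by (simp add: vn_vm)
      have P1: "nn k qq \<ge> 3 * \<mu>" if pm: "nn k pp = \<mu>" and qg: "nn k qq \<ge> 2 * \<mu>"
      proof -
        have "vm pp a = e" by (simp add: pp_def fun_eq_iff v_apply)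
        then obtain g where g: "Good k g" "pp = g a"
          using R[OF l(1) pL(1) na3(1)] pm d(1) by (auto simp: \<mu>_def)
        define b where "b = g a'"
        have b: "b \<in> Lset j k" "nn k b = 2 ^ (k + j) / 2" using GoodD[OF g(1)] l(2) na3 by (auto simp: b_def)
        have gl: "g (vm a a') = vm (g a) (g a')" using GoodD(3)[OF g(1)] .
        have "vm qq b = vp (vm e' e) (vm (g (vm a a')) (vm a a'))"
          unfolding gl g(2)[symmetric] by (simp add: qq_def b_def pp_def fun_eq_iff v_apply)
        then have qb: "vm qq b \<in> Lset (Suc (Suc j)) k" using L_add[OF d(3) GoodD(2)[OF g(1) vaa]] by simp
        define z where "z = vs (1/2) (vm qq b)"
        have z: "z \<in> Lset j k" using L_half qb by (simp add: z_def)
        have qz: "qq = vp b (vs 2 z)" by (rule ext) (simp add: z_def v_apply field_simps)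
        have "nn k qq = \<mu> \<or> nn k qq \<ge> 3 * \<mu>" using ParN[OF b(1) z b(2)] qz by (simp add: \<mu>_def)
        then show ?thesis using qg \<mu>pos by linarith
      qed
      have P2: "nn k pp \<ge> 3 * \<mu>" if qm: "nn k qq = \<mu>" and pg: "nn k pp \<ge> 2 * \<mu>"
      proof -
        have "vm qq a' = e'" by (simp add: qq_def fun_eq_iff v_apply)
        then obtain g where g: "Good k g" "qq = g a'"
          using R[OF l(2) pL(2) na3(2)] qm d(2) by (auto simp: \<mu>_def)
        define b where "b = g a"
        have b: "b \<in> Lset j k" "nn k b = 2 ^ (k + j) / 2" using GoodD[OF g(1)] l(1) na3 by (auto simp: b_def)
        have gl: "g (vm a' a) = vm (g a') (g a)" using GoodD(3)[OF g(1)] .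
        have "vm pp b = vp (vn (vm e' e)) (vm (g (vm a' a)) (vm a' a))"
          unfolding gl g(2)[symmetric] by (simp add: qq_def b_def pp_def fun_eq_iff v_apply)
        then have pb: "vm pp b \<in> Lset (Suc (Suc j)) k"
          using L_add[OF L_neg[OF d(3)] GoodD(2)[OF g(1) l(3)]] by simp
        define z where "z = vs (1/2) (vm pp b)"
        have z: "z \<in> Lset j k" using L_half pb by (simp add: z_def)
        have pz: "pp = vp b (vs 2 z)" by (rule ext) (simp add: z_def v_apply field_simps)
        have "nn k pp = \<mu> \<or> nn k pp \<ge> 3 * \<mu>" using ParN[OF b(1) z b(2)] pz by (simp add: \<mu>_def)
        then show ?thesis using pg \<mu>pos by linarith
      qed
      from IP IQ show ?thesis
      proof (elim disjE)
        assume "nn k pp = \<mu>" "nn k qq = \<mu>" then show ?thesis using na2 by simp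
      next
        assume "nn k pp = \<mu>" "nn k qq \<ge> 2 * \<mu>" then show ?thesis using P1 by fastforce
      next
        assume "nn k pp \<ge> 2 * \<mu>" "nn k qq = \<mu>" then show ?thesis using P2 by fastforce
      next
        assume "nn k pp \<ge> 2 * \<mu>" "nn k qq \<ge> 2 * \<mu>" then show ?thesis by simp
      qed
    qed
  qed
  then show ?case using nx nl \<mu>S by simp
qed


lemma vadd_Cons[simp]: "vadd (b # u) (c # w) = (b \<noteq> c) # vadd u w" by (simp add: vadd_def)
lemma vadd_Nil[simp]: "vadd [] w = []" "vadd u [] = []" by (simp_all add: vadd_def)
lemma length_vadd[simp]: "length (vadd u w) = min (length u) (length w)" by (simp add: vadd_def)
lemma vadd_Vsp: "u \<in> Vsp m \<Longrightarrow> w \<in> Vsp m \<Longrightarrow> vadd u w \<in> Vsp m" by (simp add: Vsp_def)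
lemma vadd_cancel: "length u = length w \<Longrightarrow> vadd u (vadd u w) = w"
proof (induction u arbitrary: w)
  case Nil then show ?case by simp
next
  case (Cons b u) then show ?case by (cases w) auto
qed
lemma vadd_comm: "vadd u w = vadd w u"
proof (induction u arbitrary: w)
  case Nil then show ?case by simp
next
  case (Cons b u) then show ?case by (cases w) auto
qed
lemma vadd_assoc: "vadd (vadd u w) z = vadd u (vadd w z)"
proof (induction u arbitrary: w z)
  case Nil then show ?case by simp
next
  case (Cons b u) then show ?case by (cases w; cases z) auto
qed
lemma vadd_zero: "vadd (replicate (length w) False) w = w"
  by (induction w) auto
lemma vadd_inj: "inj_on (vadd u) (Vsp m)" if "u \<in> Vsp m"
proof (rule inj_onI)
  fix x y assume "x \<in> Vsp m" "y \<in> Vsp m" "vadd u x = vadd u y"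
  then show "x = y" using that vadd_cancel[of u x] vadd_cancel[of u y] by (metis Vsp_def mem_Collect_eq)
qed

lemma card_Vsp: "card (Vsp m) = 2 ^ m"
proof (induction m)
  case 0 then show ?case by (simp add: Vsp_def)
next
  case (Suc m)
  have "card (Vsp (Suc m)) = card (Cons False ` Vsp m) + card (Cons True ` Vsp m)"
    unfolding Vsp_Suc by (rule card_Un_disjoint) (auto simp: finite_Vsp)
  also have "\<dots> = 2 * card (Vsp m)" by (simp add: card_image)
  finally show ?case using Suc by simp
qed

lemma lin_r_le: assumes "lin_subspace m W" "card W = 2 ^ r" shows "r \<le> m"
proof -
  have "card W \<le> card (Vsp m)" using assms(1) by (intro card_mono) (auto simp: lin_subspace_def finite_Vsp)
  then have "(2::nat) ^ r \<le> 2 ^ m" using assms(2) card_Vsp by simp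
  then show ?thesis using power_le_imp_le_exp[of 2 r m] by simp
qed

lemma sl_xvec: "sl b (\<lambda>v. c * xvec U v) = (\<lambda>w. c * xvec {w. b # w \<in> U} w)"
  by (simp add: sl_def xvec_def fun_eq_iff)

lemma slice_img: assumes "W \<subseteq> Vsp (Suc m)"
  shows "{w. b # w \<in> vadd (a0 # a') ` W} = vadd a' ` {u. (a0 \<noteq> b) # u \<in> W}"
proof (intro set_eqI iffI)
  fix w assume "w \<in> {w. b # w \<in> vadd (a0 # a') ` W}"
  then obtain x where x: "x \<in> W" "b # w = vadd (a0 # a') x" by auto
  then obtain c u where cu: "x = c # u" using assms by (cases x) (auto simp: Vsp_def)
  then show "w \<in> vadd a' ` {u. (a0 \<noteq> b) # u \<in> W}" using x by auto
next
  fix w assume "w \<in> vadd a' ` {u. (a0 \<noteq> b) # u \<in> W}"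
  then obtain u where u: "(a0 \<noteq> b) # u \<in> W" "w = vadd a' u" by auto
  then have "vadd (a0 # a') ((a0 \<noteq> b) # u) = b # w" by auto
  then show "w \<in> {w. b # w \<in> vadd (a0 # a') ` W}" using u(1) by (metis (mono_tags) image_eqI mem_Collect_eq)
qed

lemma Gen: "lin_subspace m W \<Longrightarrow> a \<in> Vsp m \<Longrightarrow> card W = 2 ^ r \<Longrightarrow>
  (\<lambda>v. 2 ^ ((m - r + j) div 2) * xvec (vadd a ` W) v) \<in> Lset j m"
proof (induction m arbitrary: j r a W)
  case 0
  have W: "W = {[]}" using 0(1) by (auto simp: lin_subspace_def Vsp_def)
  then have "r = 0" using 0(3) by (cases r) auto
  moreover have "a = []" using 0(2) by (simp add: Vsp_def)
  ultimately show ?case using W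
    by (auto simp: xvec_def fun_eq_iff intro!: exI[of _ 1])
next
  case (Suc m)
  note lin = Suc.prems(1)
  have WV: "W \<subseteq> Vsp (Suc m)" using lin by (simp add: lin_subspace_def)
  have cl: "vadd x z \<in> W" if "x \<in> W" "z \<in> W" for x z using lin that by (auto simp: lin_subspace_def)
  have finW: "finite W" using WV finite_Vsp finite_subset by blast
  obtain a0 a' where aa: "a = a0 # a'" and a'V: "a' \<in> Vsp m" using Suc.prems(2)
    by (cases a) (auto simp: Vsp_def)
  define W0 where "W0 = {u. False # u \<in> W}"
  define W1 where "W1 = {u. True # u \<in> W}"
  have W0V: "W0 \<subseteq> Vsp m" "W1 \<subseteq> Vsp m" using WV by (auto simp: W0_def W1_def Vsp_def)
  have fin01: "finite W0" "finite W1" using W0V finite_Vsp finite_subset by blast+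
  have Weq: "W = Cons False ` W0 \<union> Cons True ` W1"
  proof (intro set_eqI iffI)
    fix x assume "x \<in> W"
    then obtain c u where "x = c # u" using WV by (cases x) (auto simp: Vsp_def)
    then show "x \<in> Cons False ` W0 \<union> Cons True ` W1" using \<open>x \<in> W\<close> by (cases c) (auto simp: W0_def W1_def)
  qed (auto simp: W0_def W1_def)
  have cardW: "card W = card W0 + card W1"
    unfolding Weq by (subst card_Un_disjoint) (auto simp: fin01 card_image)
  have lin0: "lin_subspace m W0"
    unfolding lin_subspace_def
  proof (intro conjI ballI)
    show "W0 \<subseteq> Vsp m" using W0V(1) .
    show "replicate m False \<in> W0" using lin by (simp add: lin_subspace_def W0_def)
  next
    fix u w assume "u \<in> W0" "w \<in> W0"
    then have "False # u \<in> W" "False # w \<in> W" by (simp_all add: W0_def)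
    from cl[OF this] show "vadd u w \<in> W0" by (simp add: W0_def)
  qed
  define c :: real where "c = 2 ^ ((Suc m - r + j) div 2)"
  define y where "y = (\<lambda>v. c * xvec (vadd a ` W) v)"
  define YA where "YA = (\<lambda>w. c * xvec (vadd a' ` W0) w)"
  define YB where "YB = (\<lambda>w. c * xvec (vadd a' ` W1) w)"
  have y0: "y [] = 0"
  proof -
    have "vadd a x \<noteq> []" if "x \<in> W" for x
    proof -
      have "length (vadd a x) = Suc m" using that WV Suc.prems(2) by (auto simp: Vsp_def)
      then show ?thesis by (metis list.size(3) nat.distinct(1))
    qed
    then have "[] \<notin> vadd a ` W" by (metis imageE)
    then show ?thesis by (simp add: y_def xvec_def)
  qed
  have sly: "sl b y = (\<lambda>w. c * xvec (vadd a' ` {u. (a0 \<noteq> b) # u \<in> W}) w)" for b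
    unfolding y_def sl_xvec aa slice_img[OF WV] ..
  have key: "YA \<in> Lset j m \<and> YB \<in> Lset j m \<and> vm YB YA \<in> Lset (Suc j) m"
  proof (cases "W1 = {}")
    case True
    then have cW0: "card W0 = 2 ^ r" using cardW Suc.prems(3) by simp
    have rm: "r \<le> m" using lin_r_le[OF lin0 cW0] .
    have e: "Suc m - r + j = m - r + Suc j" using rm by simp
    have YA1: "YA \<in> Lset (Suc j) m" using Suc.IH[OF lin0 a'V cW0, of "Suc j"] e by (simp add: YA_def c_def)
    have YB0: "YB = zz" using True by (simp add: YB_def xvec_def fun_eq_iff v_apply)
    show ?thesis using YA1 L_mono[OF YA1] L_zero YB0 L_neg[OF YA1] by simp
  next
    case False
    then obtain s where s: "True # s \<in> W" by (auto simp: W1_def)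
    have sV: "s \<in> Vsp m" using s WV by (auto simp: Vsp_def)
    have W1eq: "W1 = vadd s ` W0"
    proof (intro set_eqI iffI)
      fix u assume u: "u \<in> W1"
      then have uV: "u \<in> Vsp m" using W0V by auto
      have "True # u \<in> W" using u by (simp add: W1_def)
      from cl[OF s this] have "vadd (True # s) (True # u) \<in> W" .
      then have "vadd s u \<in> W0" by (simp add: W0_def)
      moreover have "u = vadd s (vadd s u)" using uV sV by (simp add: vadd_cancel Vsp_def)
      ultimately show "u \<in> vadd s ` W0" by blast
    next
      fix u assume "u \<in> vadd s ` W0"
      then obtain w where w: "w \<in> W0" "u = vadd s w" by auto
      have "False # w \<in> W" using w(1) by (simp add: W0_def)
      from cl[OF s this] have "vadd (True # s) (False # w) \<in> W" .
      then show "u \<in> W1" using w by (simp add: W1_def)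
    qed
    have cW1: "card W1 = card W0" unfolding W1eq
      by (rule card_image) (rule inj_on_subset[OF vadd_inj[OF sV] W0V(1)])
    have "2 ^ r = 2 * card W0" using cardW cW1 Suc.prems(3) by simp
    then obtain r' where r': "r = Suc r'" by (cases r) auto
    then have cW0: "card W0 = 2 ^ r'" using \<open>2 ^ r = 2 * card W0\<close> by simp
    have e1: "Suc m - r + j = m - r' + j" using r' by simp
    have YA: "YA \<in> Lset j m" using Suc.IH[OF lin0 a'V cW0, of j] e1 by (simp add: YA_def c_def)
    have img: "vadd a' ` W1 = vadd (vadd a' s) ` W0" unfolding W1eq image_image
      by (simp add: vadd_assoc)
    have YB: "YB \<in> Lset j m" using Suc.IH[OF lin0 vadd_Vsp[OF a'V sV] cW0, of j] e1 img
      by (simp add: YB_def c_def)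
    have D: "vm YB YA \<in> Lset (Suc j) m"
    proof (cases "s \<in> W0")
      case True
      have "vadd s ` W0 = W0"
      proof (intro set_eqI iffI)
        fix u assume "u \<in> vadd s ` W0" then show "u \<in> W0" using lin0 True by (auto simp: lin_subspace_def)
      next
        fix u assume u: "u \<in> W0"
        then have "vadd s u \<in> W0" using lin0 True by (auto simp: lin_subspace_def)
        moreover have "u = vadd s (vadd s u)" using u W0V sV by (auto simp: vadd_cancel Vsp_def)
        ultimately show "u \<in> vadd s ` W0" by blast
      qed
      then have "YB = YA" by (simp add: YA_def YB_def W1eq)
      then have "vm YB YA = zz" by (simp add: fun_eq_iff v_apply)
      then show ?thesis using L_zero by simp
    next
      case sn: False
      define W' where "W' = W0 \<union> W1"
      have dis: "W0 \<inter> W1 = {}"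
      proof (rule ccontr)
        assume "W0 \<inter> W1 \<noteq> {}"
        then obtain w where w: "w \<in> W0" "w \<in> W1" by auto
        then obtain w0 where w0: "w0 \<in> W0" "w = vadd s w0" using W1eq by auto
        have "vadd w w0 \<in> W0" using lin0 w(1) w0(1) by (auto simp: lin_subspace_def)
        moreover have "vadd w w0 = s"
        proof -
          have l: "length w0 = length s" using w0(1) W0V sV by (auto simp: Vsp_def)
          have "vadd w w0 = vadd w0 (vadd w0 s)" using w0(2) by (simp add: vadd_comm)
          also have "\<dots> = s" using l by (rule vadd_cancel)
          finally show ?thesis .
        qed
        ultimately show False using sn by simp
      qed
      have linW': "lin_subspace m W'"
        unfolding lin_subspace_def
      proof (intro conjI ballI)
        show "W' \<subseteq> Vsp m" using W0V by (auto simp: W'_def)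
        show "replicate m False \<in> W'" using lin0 by (auto simp: W'_def lin_subspace_def)
      next
        fix u w assume "u \<in> W'" "w \<in> W'"
        then obtain b1 b2 where "b1 # u \<in> W" "b2 # w \<in> W" by (auto simp: W'_def W0_def W1_def)
        then have "vadd (b1 # u) (b2 # w) \<in> W" using cl by blast
        then show "vadd u w \<in> W'" by (cases "b1 \<noteq> b2") (auto simp: W'_def W0_def W1_def)
      qed
      have cW': "card W' = 2 ^ r" using cardW Suc.prems(3) dis fin01 by (simp add: W'_def card_Un_disjoint)
      have rm: "r \<le> m" using lin_r_le[OF linW' cW'] .
      have e2: "Suc m - r + j = m - r + Suc j" using rm by simp
      define YU where "YU = (\<lambda>w. c * xvec (vadd a' ` W') w)"
      have YU: "YU \<in> Lset (Suc j) m" using Suc.IH[OF linW' a'V cW', of "Suc j"] e2 by (simp add: YU_def c_def)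
      have dis2: "vadd a' ` W0 \<inter> vadd a' ` W1 = {}"
        using dis inj_on_image_Int[OF vadd_inj[OF a'V], of W0 W1] W0V by auto
      have "vm YB YA = vm YU (vs 2 YA)"
      proof (rule ext)
        fix w
        have U: "vadd a' ` W' = vadd a' ` W0 \<union> vadd a' ` W1" by (simp add: W'_def image_Un)
        show "vm YB YA w = vm YU (vs 2 YA) w"
          using dis2 unfolding v_apply YA_def YB_def YU_def U xvec_def
          by (cases "w \<in> vadd a' ` W0"; cases "w \<in> vadd a' ` W1") auto
      qed
      moreover have "vs 2 YA \<in> Lset (Suc j) m" using L_mono[OF L_dbl[OF YA]] .
      ultimately show ?thesis using L_sub[OF YU] by simp
    qed
    show ?thesis using YA YB D by blast
  qed
  have "sl False y \<in> Lset j m \<and> sl True y \<in> Lset j m \<and> vm (sl True y) (sl False y) \<in> Lset (Suc j) m"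
  proof (cases a0)
    case True
    then have "sl False y = YB" "sl True y = YA" by (simp_all add: sly YA_def YB_def W0_def W1_def)
    then show ?thesis using key L_neg[of "vm YB YA"] by (simp add: vn_vm)
  next
    case False
    then have "sl False y = YA" "sl True y = YB" by (simp_all add: sly YA_def YB_def W0_def W1_def)
    then show ?thesis using key by simp
  qed
  then have "y \<in> Lset j (Suc m)" using y0 by (simp only: Lset.simps mem_Collect_eq)
  then show ?case unfolding y_def c_def .
qed


lemma span_sub: assumes "x \<in> int_span S" and "\<And>g. g \<in> S \<Longrightarrow> g \<in> Lset j m"
  shows "x \<in> Lset j m"
  using assms(1)
proof induction
  case zero
  then show ?case using L_zero by (simp add: zz_def)
next
  case (add x g)
  then show ?case using L_add[of x j m g] assms(2) by (simp add: vp_def)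
next
  case (sub x g)
  then show ?case using L_sub[of x j m g] assms(2) by (simp add: vm_def)
qed

lemma Lambda_sub: "x \<in> Lambda_BW m \<Longrightarrow> x \<in> Lset 0 m"
  unfolding Lambda_BW_def
proof (erule span_sub)
  fix g assume "g \<in> {(\<lambda>v. 2 ^ ((m - r) div 2) * xvec U v) | r U. r \<le> m \<and> affine_subspace m r U}"
  then obtain r U where g: "g = (\<lambda>v. 2 ^ ((m - r) div 2) * xvec U v)" "affine_subspace m r U" by auto
  then obtain a W where "a \<in> Vsp m" "lin_subspace m W" "card W = 2 ^ r" "U = vadd a ` W"
    by (auto simp: affine_subspace_def)
  then show "g \<in> Lset 0 m" using Gen[of m W a r 0] g(1) by simp
qed

lemma Delta_sub: "x \<in> Delta_BW m \<Longrightarrow> x \<in> Lset 1 m"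
  unfolding Delta_BW_def
proof (erule span_sub)
  fix g assume "g \<in> {(\<lambda>v. 2 ^ ((m - r + 1) div 2) * xvec U v) | r U. r \<le> m \<and> affine_subspace m r U}"
  then obtain r U where g: "g = (\<lambda>v. 2 ^ ((m - r + 1) div 2) * xvec U v)" "affine_subspace m r U" by auto
  then obtain a W where "a \<in> Vsp m" "lin_subspace m W" "card W = 2 ^ r" "U = vadd a ` W"
    by (auto simp: affine_subspace_def)
  then show "g \<in> Lset 1 m" using Gen[of m W a r 1] g(1) by simp
qed

theorem lemma3p1:
  fixes m :: nat and l x :: "bool list \<Rightarrow> real"
  assumes "m \<ge> 1"
    and "l \<in> Lambda_BW m"
    and "inner_V m l l = 2 ^ (m - 1)"
    and "\<exists>d \<in> Delta_BW m. x = (\<lambda>v. l v + d v)"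
  shows "inner_V m x x = inner_V m l l \<or> inner_V m x x \<ge> 2 ^ m"
proof -
  obtain d where d: "d \<in> Delta_BW m" "x = (\<lambda>v. l v + d v)" using assms(4) by blast
  have l0: "l \<in> Lset 0 m" using Lambda_sub[OF assms(2)] .
  have d1: "d \<in> Lset (Suc 0) m" using Delta_sub[OF d(1)] by simp
  have "(2::real) ^ (m - 1) = 2 ^ (m + 0) / 2"
    using assms(1) by (cases m) auto
  then have nl: "nn m l = 2 ^ (m + 0) / 2" using assms(3) by (simp add: nn_def)
  have "x = vp l d" using d(2) by (simp add: vp_def)
  then show ?thesis using P[OF l0 nl d1] by (simp add: nn_def)
qed


end
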